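(* For any $\alpha > 1$ and $x \geq 0$, \[ \overline{K}_\alpha(x) \geq (\alpha - 1)\,\overline{K}_{\alpha-1}(x). \]
   Context: $K_\alpha(x) := \int_0^\infty e^{-x\cosh t}\cosh(\alpha t)\,{\rm d}t$ for $\alpha\in\mathbb{R}$, $x > 0$; $\overline{K}_\alpha(x) := 2^{1-\alpha}x^\alpha K_\alpha(x)$ for $x>0$, and $\overline{K}_\alpha(0) := \Gamma(\alpha)$ for $\alpha > 0$. *)

theory Defs
  imports "HOL-Analysis.Analysis"
begin

definition besselK :: "real \<Rightarrow> real \<Rightarrow> real" where
  "besselK \<alpha> x = integral {0..} (\<lambda>t. exp (- x * cosh t) * cosh (\<alpha> * t))"

definition besselK_bar :: "real \<Rightarrow> real \<Rightarrow> real" where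
  "besselK_bar \<alpha> x =
     (if x = 0 then Gamma \<alpha> else 2 powr (1 - \<alpha>) * x powr \<alpha> * besselK \<alpha> x)"

end

theory Submission
  imports Defs "HOL-Real_Asymp.Real_Asymp"
begin

lemma cosh_ge_sq: "t \<ge> 0 \<Longrightarrow> cosh (t::real) \<ge> t^2/8"
proof -
  assume t: "t \<ge> 0"
  have "cosh t = (exp t + exp (-t))/2" by (simp add: cosh_def)
  hence c: "cosh t \<ge> exp t / 2" by (simp add: add_increasing2 divide_right_mono)
  have "exp t = exp (t/2)^2" by (simp flip: exp_of_nat_mult)
  moreover have "exp (t/2) \<ge> 1 + t/2" by (rule exp_ge_add_one_self)
  hence "exp (t/2)^2 \<ge> (1 + t/2)^2" using t by (intro power_mono) auto
  moreover have "(1+t/2)^2 \<ge> t^2/4" using t by (simp add: power2_eq_square field_simps)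
  ultimately show ?thesis using c by linarith
qed

lemma cosh_le_exp_abs: "cosh (y::real) \<le> exp \<bar>y\<bar>"
proof -
  have "cosh y = (exp y + exp (-y))/2" by (simp add: cosh_def)
  moreover have "exp y + exp (-y) \<le> exp \<bar>y\<bar> + exp \<bar>y\<bar>" by (intro add_mono) auto
  ultimately show ?thesis by simp
qed

lemma g_bound:
  fixes x t \<beta> :: real
  assumes x: "x > 0" and t: "t \<ge> 0"
  shows "exp (-x * cosh t) * cosh (\<beta> * t) \<le> exp (2*(\<bar>\<beta>\<bar>+1)^2/x) * exp (-t)"
proof -
  define c where "c = \<bar>\<beta>\<bar>+1"
  have "cosh (\<beta>*t) \<le> exp (\<bar>\<beta>\<bar>*t)" using cosh_le_exp_abs[of "\<beta>*t"] t by (simp add: abs_mult)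
  moreover have "exp (-x * cosh t) \<le> exp (-x * t^2/8)" using cosh_ge_sq[OF t] x by simp
  ultimately have "exp (-x * cosh t) * cosh (\<beta> * t) \<le> exp (-x * t^2/8) * exp (\<bar>\<beta>\<bar>*t)"
    by (intro mult_mono) auto
  also have "\<dots> = exp (-x * t^2/8 + \<bar>\<beta>\<bar>*t)" by (simp add: mult_exp_exp)
  also have "\<dots> \<le> exp (2*c^2/x - t)"
  proof -
    have "x*(-x * t^2/8 + c*t) - 2*c^2 = -((x*t - 4*c)^2)/8" by (simp add: power2_eq_square field_simps)
    also have "\<dots> \<le> 0" by simp
    finally have "x*(-x * t^2/8 + c*t) \<le> x * (2*c^2/x)" using x by simp
    hence "-x * t^2/8 + c*t \<le> 2*c^2/x" using x by (simp add: pos_le_divide_eq mult.commute)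
    thus ?thesis unfolding c_def by (simp add: algebra_simps)
  qed
  also have "\<dots> = exp (2*c^2/x) * exp (-t)" by (simp add: exp_diff exp_minus field_simps)
  finally show ?thesis unfolding c_def .
qed

lemma g_integrable:
  fixes x \<beta> :: real
  assumes x: "x > 0"
  shows "(\<lambda>t. exp (-x * cosh t) * cosh (\<beta> * t)) integrable_on {0..}"
proof (rule measurable_bounded_by_integrable_imp_integrable)
  show "(\<lambda>t. exp (-x * cosh t) * cosh (\<beta> * t)) \<in> borel_measurable (lebesgue_on {0..})"
    by (intro continuous_imp_measurable_on_sets_lebesgue continuous_intros) auto
  show "(\<lambda>t. exp (2*(\<bar>\<beta>\<bar>+1)^2/x) * exp (-t)) integrable_on {0..}"
  proof -
    have "(\<lambda>t::real. exp (-t)) integrable_on {0..}"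
    proof (rule has_integral_integrable)
      show "((\<lambda>t::real. exp (-t)) has_integral 1) {0..}"
        using has_integral_exp_minus_to_infinity[of 1 0] by simp
    qed
    thus ?thesis by (rule integrable_on_mult_right)
  qed
  show "norm (exp (-x * cosh t) * cosh (\<beta> * t)) \<le> exp (2*(\<bar>\<beta>\<bar>+1)^2/x) * exp (-t)" if "t \<in> {0..}" for t
    using g_bound[OF x, of t \<beta>] that by simp
qed auto

lemma abs_sinh_le_cosh: "\<bar>sinh (y::real)\<bar> \<le> cosh y"
  using sinh_less_cosh_real[of y] sinh_less_cosh_real[of "-y"] by (simp add: abs_if)

lemma int_lim:
  fixes h :: "real \<Rightarrow> real"
  assumes int: "h integrable_on {0..}" and nonneg: "\<And>t. t \<ge> 0 \<Longrightarrow> h t \<ge> 0"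
  shows "(\<lambda>n. integral {0..real n} h) \<longlonglongrightarrow> integral {0..} h"
proof -
  define f where "f \<equiv> \<lambda>n::nat. \<lambda>t. if t \<in> {0..real n} then h t else 0"
  have intn: "h integrable_on {0..real n}" for n
    using int by (rule integrable_on_subinterval) auto
  have has_integral_f: "\<And>n. (f n has_integral (integral {0..real n} h)) {0..}"
    unfolding f_def
    by (metis (no_types, lifting) ext Icc_subset_Ici_iff order.refl
        has_integral_restrict intn integrable_integral)
  have "(\<lambda>n. integral {0..} (f n)) \<longlonglongrightarrow> integral {0..} h"
  proof (rule dominated_convergence(2))
    show "f n integrable_on {0..}" for n using has_integral_f by blast
    show "h integrable_on {0..}" by (rule int)
    show "norm (f n t) \<le> h t" if "t \<in> {0..}" for n t
      using nonneg[of t] that by (auto simp: f_def)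
    show "(\<lambda>n. f n t) \<longlonglongrightarrow> h t" if "t \<in> {0..}" for t
    proof -
      have "eventually (\<lambda>n. real n \<ge> t) at_top"
        by (meson eventually_sequentiallyI nat_ceiling_le_eq)
      with that have "eventually (\<lambda>n. f n t = h t) at_top"
        by (simp add: eventually_mono f_def)
      thus ?thesis by (simp add: tendsto_eventually)
    qed
  qed
  moreover have "integral {0..} (f n) = integral {0..real n} h" for n
    using has_integral_f integral_unique by blast
  ultimately show ?thesis by simp
qed

lemma key_ineq:
  fixes \<alpha> x :: real
  assumes a: "\<alpha> > 1" and x: "x > 0"
  shows "x * besselK \<alpha> x \<ge> 2 * (\<alpha> - 1) * besselK (\<alpha> - 1) x"
proof -
  define g where "g = (\<lambda>\<beta> t. exp (-x * cosh t) * cosh (\<beta> * t))"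
  define \<nu> where "\<nu> = \<alpha> - 1"
  define F where "F = (\<lambda>t. exp (-x * cosh t) * sinh (\<nu> * t))"
  define F' where "F' = (\<lambda>t. exp (-x * cosh t) * (-x * sinh t) * sinh (\<nu> * t) + exp (-x * cosh t) * (cosh (\<nu> * t) * \<nu>))"
  have gnn: "g \<beta> t \<ge> 0" for \<beta> t by (simp add: g_def)
  have gint: "g \<beta> integrable_on {0..}" for \<beta> unfolding g_def by (rule g_integrable[OF x])
  have gcont: "continuous_on S (g \<beta>)" for \<beta> S unfolding g_def by (intro continuous_intros)
  have L: "(\<lambda>n. integral {0..real n} (g \<beta>)) \<longlonglongrightarrow> besselK \<beta> x" for \<beta>
    unfolding besselK_def using int_lim[OF gint gnn] by (simp add: g_def)
  have deriv: "(F has_vector_derivative F' t) (at t within {0..b})" for t b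
    unfolding F_def F'_def has_real_derivative_iff_has_vector_derivative[symmetric]
    by (auto intro!: derivative_eq_intros)
  have ident: "x * g \<alpha> t - 2 * \<nu> * g \<nu> t = x * g (\<alpha> - 2) t - 2 * F' t" for t
  proof -
    have e1: "\<alpha> * t = \<nu> * t + t" by (simp add: \<nu>_def algebra_simps)
    have e2: "(\<alpha> - 2) * t = \<nu> * t - t" by (simp add: \<nu>_def algebra_simps)
    have c1: "cosh (\<alpha> * t) = cosh (\<nu> * t) * cosh t + sinh (\<nu> * t) * sinh t"
      unfolding e1 by (rule cosh_add)
    have c2: "cosh ((\<alpha> - 2) * t) = cosh (\<nu> * t) * cosh t - sinh (\<nu> * t) * sinh t"
      unfolding e2 by (rule cosh_diff)
    show ?thesis unfolding g_def F'_def c1 c2 by (simp add: algebra_simps)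
  qed
  have eqn: "x * integral {0..real n} (g \<alpha>) - 2 * \<nu> * integral {0..real n} (g \<nu>)
      = x * integral {0..real n} (g (\<alpha> - 2)) - 2 * F (real n)" for n
  proof -
    have i: "g \<beta> integrable_on {0..real n}" for \<beta> by (rule integrable_continuous_interval[OF gcont])
    have ftc: "(F' has_integral F (real n) - F 0) {0..real n}"
      by (rule fundamental_theorem_of_calculus) (auto intro: deriv)
    have "((\<lambda>t. x * g (\<alpha> - 2) t - 2 * F' t) has_integral
            x * integral {0..real n} (g (\<alpha> - 2)) - 2 * (F (real n) - F 0)) {0..real n}"
      by (intro has_integral_diff has_integral_mult_right ftc integrable_integral i)
    moreover have "((\<lambda>t. x * g \<alpha> t - 2 * \<nu> * g \<nu> t) has_integral
            x * integral {0..real n} (g \<alpha>) - 2 * \<nu> * integral {0..real n} (g \<nu>)) {0..real n}"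
      by (intro has_integral_diff has_integral_mult_right integrable_integral i)
    ultimately show ?thesis using ident by (simp add: F_def has_integral_unique)
  qed
  have F0: "(\<lambda>n. F (real n)) \<longlonglongrightarrow> 0"
  proof (rule Lim_null_comparison)
    define M where "M = exp (2*(\<bar>\<nu>\<bar>+1)^2/x)"
    show "\<forall>\<^sub>F n in sequentially. norm (F (real n)) \<le> M * exp (- real n)"
    proof (intro always_eventually allI)
      fix n :: nat
      have "norm (F (real n)) \<le> g \<nu> (real n)"
        unfolding F_def g_def using abs_sinh_le_cosh[of "\<nu> * real n"]
        by (simp add: abs_mult mult_left_mono)
      also have "\<dots> \<le> M * exp (- real n)" unfolding g_def M_def by (rule g_bound[OF x]) simp
      finally show "norm (F (real n)) \<le> M * exp (- real n)" .
    qed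
    show "(\<lambda>n. M * exp (- real n)) \<longlonglongrightarrow> 0" by real_asymp
  qed
  have "(\<lambda>n. x * integral {0..real n} (g \<alpha>) - 2 * \<nu> * integral {0..real n} (g \<nu>))
        \<longlonglongrightarrow> x * besselK \<alpha> x - 2 * \<nu> * besselK \<nu> x"
    by (intro tendsto_intros L)
  moreover have "(\<lambda>n. x * integral {0..real n} (g (\<alpha> - 2)) - 2 * F (real n))
        \<longlonglongrightarrow> x * besselK (\<alpha> - 2) x - 2 * 0"
    by (intro tendsto_intros L F0)
  ultimately have "x * besselK \<alpha> x - 2 * \<nu> * besselK \<nu> x = x * besselK (\<alpha> - 2) x"
    using eqn LIMSEQ_unique by fastforce
  moreover have "besselK (\<alpha> - 2) x \<ge> 0"
    unfolding besselK_def by (rule Henstock_Kurzweil_Integration.integral_nonneg) (use gint gnn in \<open>auto simp: g_def\<close>)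
  ultimately show ?thesis using x unfolding \<nu>_def by (smt (verit) mult_nonneg_nonneg)
qed

theorem lemma3p1:
  fixes \<alpha> x :: real
  assumes "\<alpha> > 1" and "x \<ge> 0"
  shows "besselK_bar \<alpha> x \<ge> (\<alpha> - 1) * besselK_bar (\<alpha> - 1) x"
proof (cases "x = 0")
  case True
  have "\<alpha> - 1 \<notin> \<int>\<^sub>\<le>\<^sub>0" using assms(1) nonpos_Ints_nonpos by fastforce
  from Gamma_plus1[OF this] have "Gamma \<alpha> = (\<alpha> - 1) * Gamma (\<alpha> - 1)" by simp
  thus ?thesis using True by (simp add: besselK_bar_def)
next
  case False
  hence x: "x > 0" using assms(2) by simp
  define P where "P = 2 powr (1 - \<alpha>) * x powr (\<alpha> - 1)"
  have P: "P > 0" using x by (simp add: P_def)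
  have l: "besselK_bar \<alpha> x = P * (x * besselK \<alpha> x)"
    using x False by (simp add: besselK_bar_def P_def powr_add[symmetric] powr_diff)
  have r: "(\<alpha> - 1) * besselK_bar (\<alpha> - 1) x = P * (2 * (\<alpha> - 1) * besselK (\<alpha> - 1) x)"
  proof -
    have e: "1 - (\<alpha> - 1) = 1 + (1 - \<alpha>)" by simp
    have "(2::real) powr (1 - (\<alpha> - 1)) = 2 * 2 powr (1 - \<alpha>)"
      unfolding e by (subst powr_add) simp
    thus ?thesis using False by (simp add: besselK_bar_def P_def)
  qed
  show ?thesis unfolding l r using key_ineq[OF assms(1) x] P by (simp add: mult_left_mono)
qed

end
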